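(* Under the standing assumptions below, suppose $3\sigma>2L$, $0<\gamma<\frac{3\sigma-2L}{L^2}$, and that $f+g$ is coercive, i.e. $\liminf_{\|u\|\to\infty}(f+g)(u)=\infty$. Then any sequence $\{(y^t,z^t,x^t)\}$ generated by the PR splitting iteration is bounded.
   Context: Standing assumptions: $f:\mathbb{R}^n\to\mathbb{R}$ is differentiable and strongly convex with modulus at least $\sigma>0$ (i.e. $f-\frac{\sigma}{2}\|\cdot\|^2$ is convex), and $\nabla f$ is Lipschitz continuous with modulus at most $L>0$. The function $g:\mathbb{R}^n\to(-\infty,\infty]$ is proper and lower semicontinuous, and for the $\gamma>0$ used, $\operatorname{Argmin}_u\{\gamma g(u)+\frac12\|u-w\|^2\}$ is nonempty for every $w\in\mathbb{R}^n$. PR splitting iteration: given $x^0$ and $\gamma>0$, for $t=0,1,2,\dots$: $y^{t+1}=\operatorname{argmin}_y\{f(y)+\frac{1}{2\gamma}\|y-x^t\|^2\}$; $z^{t+1}\in\operatorname{Argmin}_z\{g(z)+\frac{1}{2\gamma}\|2y^{t+1}-x^t-z\|^2\}$; $x^{t+1}=x^t+2(z^{t+1}-y^{t+1})$. *)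

theory Defs
  imports "HOL-Analysis.Analysis"
begin

definition lsc :: "('a::topological_space \<Rightarrow> ereal) \<Rightarrow> bool" where
  "lsc g \<longleftrightarrow> (\<forall>x. g x \<le> Liminf (at x) g)"

definition proper_fun :: "('a \<Rightarrow> ereal) \<Rightarrow> bool" where
  "proper_fun g \<longleftrightarrow> (\<forall>x. g x \<noteq> -\<infinity>) \<and> (\<exists>x. g x \<noteq> \<infinity>)"

definition is_minimizer :: "('a \<Rightarrow> 'b::linorder) \<Rightarrow> 'a \<Rightarrow> bool" where
  "is_minimizer h u \<longleftrightarrow> (\<forall>v. h u \<le> h v)"

end

theory Submission
  imports Defs
begin

lemma sq_id:
  fixes p q :: "'a::real_inner" and s :: real
  shows "(norm ((1-s) *\<^sub>R p + s *\<^sub>R q))\<^sup>2 = (1-s)*(norm p)\<^sup>2 + s*(norm q)\<^sup>2 - s*(1-s)*(norm (p-q))\<^sup>2"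
  unfolding power2_norm_eq_inner by (simp add: inner_simps algebra_simps inner_commute)

lemma key_id:
  fixes a a' p p' :: "'a::real_inner" and \<gamma> :: real
  assumes "x = a + \<gamma> *\<^sub>R p" "x' = a' + \<gamma> *\<^sub>R p'" "b = a + (1/2) *\<^sub>R (x' - x)"
  shows "(norm (a - x'))\<^sup>2 - 2*(norm (a'-x'))\<^sup>2 + (norm (2 *\<^sub>R a' - x' - b))\<^sup>2
     - (norm (2 *\<^sub>R a - x - b))\<^sup>2 + (norm (a - x))\<^sup>2 = (norm (a'-a))\<^sup>2 + \<gamma>\<^sup>2 * (norm (p'-p))\<^sup>2"
  unfolding power2_norm_eq_inner assms(3) unfolding assms(1,2) by (simp add: inner_simps algebra_simps power2_eq_square)

lemma low_id:
  fixes a b p :: "'a::real_inner" and \<gamma> :: real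
  assumes "x = a + \<gamma> *\<^sub>R p" "\<gamma> > 0"
  shows "((norm (2 *\<^sub>R a - x - b))\<^sup>2 - (norm (a - x))\<^sup>2) / (2*\<gamma>) = (norm (b-a))\<^sup>2/(2*\<gamma>) + p \<bullet> (b - a)"
proof -
  have "(norm (2 *\<^sub>R a - x - b))\<^sup>2 - (norm (a - x))\<^sup>2 = (norm (b-a))\<^sup>2 + 2*\<gamma>*(p \<bullet> (b - a))"
    unfolding power2_norm_eq_inner assms(1) by (simp add: inner_simps algebra_simps inner_commute)
  then show ?thesis using assms(2) by (simp add: field_simps)
qed

lemma descent:
  fixes f :: "'a::real_inner \<Rightarrow> real" and gradf :: "'a \<Rightarrow> 'a"
  assumes f_grad: "\<forall>u. (f has_derivative (\<lambda>h. gradf u \<bullet> h)) (at u)"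
    and grad_lip: "\<forall>u v. norm (gradf u - gradf v) \<le> L * norm (u - v)"
  shows "f v \<le> f u + gradf u \<bullet> (v - u) + L/2 * (norm (v-u))\<^sup>2"
proof -
  define d where "d = v - u"
  define \<phi> where "\<phi> s = f (u + s *\<^sub>R d) - s * (gradf u \<bullet> d) - L/2 * s\<^sup>2 * (norm d)\<^sup>2" for s
  have D: "(\<phi> has_real_derivative (gradf (u + s *\<^sub>R d) \<bullet> d - gradf u \<bullet> d - L * s * (norm d)\<^sup>2)) (at s)" for s
  proof -
    have l: "((\<lambda>s. u + s *\<^sub>R d) has_derivative (\<lambda>h. h *\<^sub>R d)) (at s)"
      by (auto intro!: derivative_eq_intros)
    have "((f \<circ> (\<lambda>s. u + s *\<^sub>R d)) has_derivative ((\<lambda>h. gradf (u + s *\<^sub>R d) \<bullet> h) \<circ> (\<lambda>h. h *\<^sub>R d))) (at s)"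
      using diff_chain_at[OF l] f_grad by blast
    then have "((\<lambda>s. f (u + s *\<^sub>R d)) has_real_derivative (gradf (u + s *\<^sub>R d) \<bullet> d)) (at s)"
      unfolding has_field_derivative_def
    proof -
      assume H: "((f \<circ> (\<lambda>s. u + s *\<^sub>R d)) has_derivative ((\<lambda>h. gradf (u + s *\<^sub>R d) \<bullet> h) \<circ> (\<lambda>h. h *\<^sub>R d))) (at s)"
      have e: "((\<lambda>h. gradf (u + s *\<^sub>R d) \<bullet> h) \<circ> (\<lambda>h. h *\<^sub>R d)) = (*) (gradf (u + s *\<^sub>R d) \<bullet> d)"
        by (auto simp: fun_eq_iff)
      show "((\<lambda>s. f (u + s *\<^sub>R d)) has_derivative (*) (gradf (u + s *\<^sub>R d) \<bullet> d)) (at s)"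
        using H unfolding e by (simp add: o_def)
    qed
    then show ?thesis unfolding \<phi>_def
      by (auto intro!: derivative_eq_intros simp: power2_eq_square algebra_simps)
  qed
  have "\<phi> 1 \<le> \<phi> 0"
  proof (rule DERIV_nonpos_imp_nonincreasing[of 0 1 \<phi>])
    fix s :: real assume s: "0 \<le> s" "s \<le> 1"
    have "gradf (u + s *\<^sub>R d) \<bullet> d - gradf u \<bullet> d = (gradf (u + s *\<^sub>R d) - gradf u) \<bullet> d"
      by (simp add: inner_diff_left)
    also have "\<dots> \<le> norm (gradf (u + s *\<^sub>R d) - gradf u) * norm d"
      by (rule norm_cauchy_schwarz)
    also have "\<dots> \<le> L * norm (s *\<^sub>R d) * norm d"
      using grad_lip[rule_format, of "u + s *\<^sub>R d" u] by (simp add: mult_right_mono)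
    also have "\<dots> = L * s * (norm d)\<^sup>2" using s by (simp add: power2_eq_square)
    finally show "\<exists>y. DERIV \<phi> s :> y \<and> y \<le> 0" using D by (intro exI[of _ "_ - L * s * (norm d)\<^sup>2"]) auto
  qed simp
  then show ?thesis unfolding \<phi>_def d_def by simp
qed

definition SC :: "('a::real_inner \<Rightarrow> real) \<Rightarrow> real \<Rightarrow> bool" where
  "SC \<phi> \<mu> \<longleftrightarrow> (\<forall>p q s. 0 \<le> s \<longrightarrow> s \<le> 1 \<longrightarrow>
     \<phi> ((1-s) *\<^sub>R p + s *\<^sub>R q) \<le> (1-s) * \<phi> p + s * \<phi> q - \<mu>/2 * s * (1-s) * (norm (p-q))\<^sup>2)"

lemma SC_f:
  assumes "convex_on UNIV (\<lambda>u. f u - \<sigma> / 2 * (norm u)\<^sup>2)"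
  shows "SC f \<sigma>"
  unfolding SC_def
proof (intro allI impI)
  fix p q :: 'a and s :: real assume s: "0 \<le> s" "s \<le> 1"
  have "f ((1-s) *\<^sub>R p + s *\<^sub>R q) - \<sigma>/2 * (norm ((1-s) *\<^sub>R p + s *\<^sub>R q))\<^sup>2
     \<le> (1-s) * (f p - \<sigma>/2 * (norm p)\<^sup>2) + s * (f q - \<sigma>/2 * (norm q)\<^sup>2)"
    using convex_onD[OF assms, of s p q] s by simp
  then have H: "f ((1-s) *\<^sub>R p + s *\<^sub>R q) - \<sigma>/2 * ((1-s)*(norm p)\<^sup>2 + s*(norm q)\<^sup>2 - s*(1-s)*(norm (p-q))\<^sup>2)
     \<le> (1-s) * (f p - \<sigma>/2 * (norm p)\<^sup>2) + s * (f q - \<sigma>/2 * (norm q)\<^sup>2)" unfolding sq_id .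
  have e: "(1-s) * (f p - \<sigma>/2 * (norm p)\<^sup>2) + s * (f q - \<sigma>/2 * (norm q)\<^sup>2) + \<sigma>/2 * ((1-s)*(norm p)\<^sup>2 + s*(norm q)\<^sup>2 - s*(1-s)*(norm (p-q))\<^sup>2)
     = (1-s) * f p + s * f q - \<sigma>/2 * s * (1-s) * (norm (p-q))\<^sup>2" by (simp add: field_simps)
  show "f ((1-s) *\<^sub>R p + s *\<^sub>R q) \<le> (1-s) * f p + s * f q - \<sigma>/2 * s * (1-s) * (norm (p-q))\<^sup>2"
    using H e by linarith
qed

lemma SC_sq: "SC (\<lambda>v. (norm (v - x))\<^sup>2 / (2*\<gamma>)) (1/\<gamma>)"
  unfolding SC_def
proof (intro allI impI)
  fix p q :: 'a and s :: real assume s: "0 \<le> s" "s \<le> 1"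
  have e: "(1-s) *\<^sub>R p + s *\<^sub>R q - x = (1-s) *\<^sub>R (p - x) + s *\<^sub>R (q - x)" by (simp add: algebra_simps)
  show "(norm ((1-s) *\<^sub>R p + s *\<^sub>R q - x))\<^sup>2 / (2*\<gamma>) \<le> (1-s) * ((norm (p - x))\<^sup>2 / (2*\<gamma>)) + s * ((norm (q - x))\<^sup>2 / (2*\<gamma>)) - (1/\<gamma>)/2 * s * (1-s) * (norm (p-q))\<^sup>2"
  proof (cases "\<gamma> = 0")
    case False
    have "(norm ((1-s) *\<^sub>R p + s *\<^sub>R q - x))\<^sup>2 / (2*\<gamma>) = (1-s) * ((norm (p - x))\<^sup>2 / (2*\<gamma>)) + s * ((norm (q - x))\<^sup>2 / (2*\<gamma>)) - (1/\<gamma>)/2 * s * (1-s) * (norm (p-q))\<^sup>2"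
      unfolding e sq_id using False by (simp add: field_simps)
    then show ?thesis by simp
  qed simp
qed

lemma SC_add: "SC \<phi> \<mu> \<Longrightarrow> SC \<psi> \<nu> \<Longrightarrow> SC (\<lambda>v. \<phi> v + \<psi> v) (\<mu> + \<nu>)"
  unfolding SC_def
proof (intro allI impI)
  fix p q :: 'a and s :: real assume A: "\<forall>p q s. 0 \<le> s \<longrightarrow> s \<le> 1 \<longrightarrow> \<phi> ((1-s) *\<^sub>R p + s *\<^sub>R q) \<le> (1-s) * \<phi> p + s * \<phi> q - \<mu>/2 * s * (1-s) * (norm (p-q))\<^sup>2"
    and B: "\<forall>p q s. 0 \<le> s \<longrightarrow> s \<le> 1 \<longrightarrow> \<psi> ((1-s) *\<^sub>R p + s *\<^sub>R q) \<le> (1-s) * \<psi> p + s * \<psi> q - \<nu>/2 * s * (1-s) * (norm (p-q))\<^sup>2"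
    and s: "0 \<le> s" "s \<le> 1"
  show "\<phi> ((1-s) *\<^sub>R p + s *\<^sub>R q) + \<psi> ((1-s) *\<^sub>R p + s *\<^sub>R q) \<le> (1-s) * (\<phi> p + \<psi> p) + s * (\<phi> q + \<psi> q) - (\<mu>+\<nu>)/2 * s * (1-s) * (norm (p-q))\<^sup>2"
    using A[rule_format, OF s, of p q] B[rule_format, OF s, of p q] by (simp add: algebra_simps add_divide_distrib)
qed

lemma SC_min:
  assumes "SC \<phi> \<mu>" "is_minimizer \<phi> m"
  shows "\<phi> m + \<mu>/2 * (norm (v - m))\<^sup>2 \<le> \<phi> v"
proof -
  have "\<mu>/2 * (norm (v - m))\<^sup>2 \<le> \<phi> v - \<phi> m"
  proof (rule field_le_mult_one_interval)
    fix r :: real assume r: "0 < r" "r < 1"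
    define s where "s = 1 - r"
    have s: "0 < s" "s \<le> 1" using r by (auto simp: s_def)
    have "\<phi> m \<le> \<phi> ((1-s) *\<^sub>R m + s *\<^sub>R v)" using assms(2) by (simp add: is_minimizer_def)
    also have "\<dots> \<le> (1-s) * \<phi> m + s * \<phi> v - \<mu>/2 * s * (1-s) * (norm (m-v))\<^sup>2"
      using assms(1) s unfolding SC_def by auto
    finally have "s * (\<mu>/2 * (1-s) * (norm (m-v))\<^sup>2) \<le> s * (\<phi> v - \<phi> m)" by (simp add: algebra_simps)
    then have "\<mu>/2 * (1-s) * (norm (m-v))\<^sup>2 \<le> \<phi> v - \<phi> m" using s by simp
    then show "r * (\<mu>/2 * (norm (v - m))\<^sup>2) \<le> \<phi> v - \<phi> m" by (simp add: s_def norm_minus_commute algebra_simps)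
  qed
  then show ?thesis by simp
qed

lemma grad_zero:
  fixes f :: "'a::real_inner \<Rightarrow> real"
  assumes f_grad: "\<forall>u. (f has_derivative (\<lambda>h. gradf u \<bullet> h)) (at u)"
    and \<gamma>: "\<gamma> > 0"
    and m: "is_minimizer (\<lambda>v. f v + (norm (v - x))\<^sup>2 / (2 * \<gamma>)) a"
  shows "x = a + \<gamma> *\<^sub>R gradf a"
proof -
  have D: "((\<lambda>v. f v + (norm (v - x))\<^sup>2 / (2 * \<gamma>)) has_derivative (\<lambda>h. gradf a \<bullet> h + ((a - x) \<bullet> h) / \<gamma>)) (at a)"
  proof -
    have "((\<lambda>v. f v + ((v - x) \<bullet> (v - x)) / (2 * \<gamma>)) has_derivative (\<lambda>h. gradf a \<bullet> h + (h \<bullet> (a - x) + (a - x) \<bullet> h) / (2 * \<gamma>))) (at a)"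
      using f_grad \<gamma> by (auto intro!: derivative_eq_intros simp: fun_eq_iff field_simps)
    then show ?thesis unfolding power2_norm_eq_inner using \<gamma>
      by (simp add: inner_commute field_simps)
  qed
  have "(\<lambda>h. gradf a \<bullet> h + ((a - x) \<bullet> h) / \<gamma>) = (\<lambda>v. 0)"
    by (rule differential_zero_maxmin[OF _ open_UNIV D]) (use m in \<open>auto simp: is_minimizer_def\<close>)
  then have "gradf a \<bullet> k + ((a - x) \<bullet> k) / \<gamma> = 0" for k by metis
  from this[of "\<gamma> *\<^sub>R gradf a + (a - x)"] have "(\<gamma> *\<^sub>R gradf a + (a - x)) \<bullet> (\<gamma> *\<^sub>R gradf a + (a - x)) = 0"
    using \<gamma> by (simp add: inner_simps field_simps inner_commute)
  then have "\<gamma> *\<^sub>R gradf a + (a - x) = 0" by simp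
  then show ?thesis by (simp add: algebra_simps)
qed

theorem theorem2:
  fixes f :: "'a::euclidean_space \<Rightarrow> real"
    and gradf :: "'a \<Rightarrow> 'a"
    and g :: "'a \<Rightarrow> ereal"
    and \<sigma> L \<gamma> :: real
    and x y z :: "nat \<Rightarrow> 'a"
  assumes f_grad: "\<forall>u. (f has_derivative (\<lambda>h. gradf u \<bullet> h)) (at u)"
    and \<sigma>_pos: "\<sigma> > 0"
    and f_strong: "convex_on UNIV (\<lambda>u. f u - \<sigma> / 2 * (norm u)\<^sup>2)"
    and L_pos: "L > 0"
    and grad_lip: "\<forall>u v. norm (gradf u - gradf v) \<le> L * norm (u - v)"
    and g_proper: "proper_fun g"
    and g_lsc: "lsc g"
    and prox_ex: "\<forall>w. \<exists>u. is_minimizer (\<lambda>v. ereal \<gamma> * g v + ereal ((norm (v - w))\<^sup>2 / 2)) u"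
    and cond: "3 * \<sigma> > 2 * L"
    and \<gamma>_pos: "0 < \<gamma>"
    and \<gamma>_bound: "\<gamma> < (3 * \<sigma> - 2 * L) / L\<^sup>2"
    and coercive: "((\<lambda>u. ereal (f u) + g u) \<longlongrightarrow> \<infinity>) at_infinity"
    and y_step: "\<forall>t. is_minimizer (\<lambda>v. f v + (norm (v - x t))\<^sup>2 / (2 * \<gamma>)) (y (Suc t))"
    and z_step: "\<forall>t. is_minimizer
                    (\<lambda>v. g v + ereal ((norm (2 *\<^sub>R y (Suc t) - x t - v))\<^sup>2 / (2 * \<gamma>))) (z (Suc t))"
    and x_step: "\<forall>t. x (Suc t) = x t + 2 *\<^sub>R (z (Suc t) - y (Suc t))"
  shows "bounded (range x) \<and> bounded (range y) \<and> bounded (range z)"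
proof -
  note DL = descent[OF f_grad grad_lip]
  have SCf: "SC f \<sigma>" by (rule SC_f[OF f_strong])
  obtain e :: 'a where e: "e \<in> Basis" using nonempty_Basis by blast
  then have ne: "norm e = 1" by simp
  have sL: "\<sigma> \<le> L"
  proof -
    have "f ((1 - 1/2) *\<^sub>R e + (1/2) *\<^sub>R (-e)) \<le> (1 - 1/2) * f e + (1/2) * f (-e) - \<sigma>/2 * (1/2) * (1 - 1/2) * (norm (e - (-e)))\<^sup>2"
      by (rule SCf[unfolded SC_def, rule_format]) simp_all
    moreover have "norm (e - (-e)) = 2"
    proof -
      have "e - (-e) = 2 *\<^sub>R e" by (simp add: scaleR_2)
      then show ?thesis using ne by simp
    qed
    moreover have "f e \<le> f 0 + gradf 0 \<bullet> e + L/2" using DL[of e 0] ne by simp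
    moreover have "f (-e) \<le> f 0 - gradf 0 \<bullet> e + L/2" using DL[of "-e" 0] ne by simp
    ultimately show ?thesis by (simp add: algebra_simps)
  qed
  have L2: "\<gamma> * L\<^sup>2 < \<sigma>"
  proof -
    have "\<gamma> * L\<^sup>2 < 3 * \<sigma> - 2 * L" using \<gamma>_bound L_pos by (simp add: field_simps)
    then show ?thesis using sL by linarith
  qed
  have gL: "\<gamma> * L < 1"
  proof -
    have "\<gamma> * L * L < L" using L2 sL by (simp add: power2_eq_square mult.assoc)
    then show ?thesis using L_pos by simp
  qed
  define a where "a t = y (Suc t)" for t
  define b where "b t = z (Suc t)" for t
  have F1: "x t = a t + \<gamma> *\<^sub>R gradf (a t)" for t
    unfolding a_def by (rule grad_zero[OF f_grad \<gamma>_pos]) (use y_step in auto)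
  have F2: "x (Suc t) = x t + 2 *\<^sub>R (b t - a t)" for t using x_step by (simp add: a_def b_def)
  have F4: "g (b t) + ereal ((norm (2 *\<^sub>R a t - x t - b t))\<^sup>2 / (2 * \<gamma>)) \<le> g v + ereal ((norm (2 *\<^sub>R a t - x t - v))\<^sup>2 / (2 * \<gamma>))" for t v
    using z_step unfolding is_minimizer_def a_def b_def by blast
  obtain p where p: "g p \<noteq> \<infinity>" using g_proper unfolding proper_fun_def by blast
  have ninf: "g u \<noteq> -\<infinity>" for u using g_proper unfolding proper_fun_def by blast
  define G where "G t = real_of_ereal (g (b t))" for t
  have gG: "g (b t) = ereal (G t)" for t
  proof -
    have "g (b t) \<noteq> \<infinity>"
    proof
      assume "g (b t) = \<infinity>"
      with F4[of t p] p ninf[of p] show False by auto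
    qed
    then show ?thesis using ninf[of "b t"] unfolding G_def by (cases "g (b t)") auto
  qed
  have F4r: "G t + (norm (2 *\<^sub>R a t - x t - b t))\<^sup>2 / (2 * \<gamma>) \<le> G s + (norm (2 *\<^sub>R a t - x t - b s))\<^sup>2 / (2 * \<gamma>)" for t s
    using F4[of t "b s"] unfolding gG by simp
  have SCpsi: "SC (\<lambda>v. f v + (norm (v - x t))\<^sup>2 / (2*\<gamma>)) (\<sigma> + 1/\<gamma>)" for t
    by (rule SC_add[OF SCf SC_sq])
  have F3: "f (a t) + (norm (a t - x t))\<^sup>2 / (2*\<gamma>) + (\<sigma> + 1/\<gamma>)/2 * (norm (v - a t))\<^sup>2 \<le> f v + (norm (v - x t))\<^sup>2 / (2*\<gamma>)" for t v
    using SC_min[OF SCpsi, of t "a t" v] y_step unfolding a_def by auto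
  define M where "M t = f (a t) + G t + ((norm (2 *\<^sub>R a t - x t - b t))\<^sup>2 - (norm (a t - x t))\<^sup>2) / (2*\<gamma>)" for t
  have dec: "M (Suc t) \<le> M t" for t
  proof -
    let ?a = "a t" and ?a' = "a (Suc t)" and ?x = "x t" and ?x' = "x (Suc t)" and ?b = "b t"
    have "?x' - ?x = 2 *\<^sub>R (?b - ?a)" using F2[of t] by simp
    then have "(1/2) *\<^sub>R (?x' - ?x) = ?b - ?a" by simp
    then have bx: "?b = ?a + (1/2) *\<^sub>R (?x' - ?x)" by simp
    have id: "(norm (?a - ?x'))\<^sup>2 - 2*(norm (?a'-?x'))\<^sup>2 + (norm (2 *\<^sub>R ?a' - ?x' - ?b))\<^sup>2
     - (norm (2 *\<^sub>R ?a - ?x - ?b))\<^sup>2 + (norm (?a - ?x))\<^sup>2 = (norm (?a'-?a))\<^sup>2 + \<gamma>\<^sup>2 * (norm (gradf ?a' - gradf ?a))\<^sup>2"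
      by (rule key_id[OF F1 F1 bx])
    have lip: "(norm (gradf ?a' - gradf ?a))\<^sup>2 \<le> L\<^sup>2 * (norm (?a' - ?a))\<^sup>2"
    proof -
      have "norm (gradf ?a' - gradf ?a) \<le> L * norm (?a' - ?a)" using grad_lip by blast
      then have "(norm (gradf ?a' - gradf ?a))\<^sup>2 \<le> (L * norm (?a' - ?a))\<^sup>2" by (simp add: power_mono)
      then show ?thesis by (simp add: power_mult_distrib)
    qed
    have c1: "\<gamma> * (norm (gradf ?a' - gradf ?a))\<^sup>2 \<le> \<sigma> * (norm (?a' - ?a))\<^sup>2"
    proof -
      have "\<gamma> * (norm (gradf ?a' - gradf ?a))\<^sup>2 \<le> \<gamma> * (L\<^sup>2 * (norm (?a' - ?a))\<^sup>2)"
        using lip \<gamma>_pos by (simp add: mult_left_mono)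
      also have "\<dots> \<le> \<sigma> * (norm (?a' - ?a))\<^sup>2" using L2 by (simp add: mult.assoc[symmetric] mult_right_mono)
      finally show ?thesis .
    qed
    have Y: "f ?a' + (norm (?a' - ?x'))\<^sup>2 / (2*\<gamma>) + (\<sigma> + 1/\<gamma>)/2 * (norm (?a - ?a'))\<^sup>2 \<le> f ?a + (norm (?a - ?x'))\<^sup>2 / (2*\<gamma>)"
      using F3[of "Suc t" ?a] .
    have Z: "G (Suc t) + (norm (2 *\<^sub>R ?a' - ?x' - b (Suc t)))\<^sup>2 / (2 * \<gamma>) \<le> G t + (norm (2 *\<^sub>R ?a' - ?x' - ?b))\<^sup>2 / (2 * \<gamma>)"
      using F4r[of "Suc t" t] .
    have "M (Suc t) - M t \<le> ((norm (?a - ?x'))\<^sup>2 - 2*(norm (?a'-?x'))\<^sup>2 + (norm (2 *\<^sub>R ?a' - ?x' - ?b))\<^sup>2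
     - (norm (2 *\<^sub>R ?a - ?x - ?b))\<^sup>2 + (norm (?a - ?x))\<^sup>2) / (2*\<gamma>) - (\<sigma> + 1/\<gamma>)/2 * (norm (?a - ?a'))\<^sup>2"
      using Y Z unfolding M_def by (simp add: diff_divide_distrib add_divide_distrib)
    also have "\<dots> = ((norm (?a'-?a))\<^sup>2 + \<gamma>\<^sup>2 * (norm (gradf ?a' - gradf ?a))\<^sup>2) / (2*\<gamma>) - (\<sigma> + 1/\<gamma>)/2 * (norm (?a' - ?a))\<^sup>2"
      unfolding id by (simp add: norm_minus_commute)
    also have "\<dots> = (\<gamma> * (norm (gradf ?a' - gradf ?a))\<^sup>2 - \<sigma> * (norm (?a' - ?a))\<^sup>2) / 2"
      using \<gamma>_pos by (simp add: field_simps power2_eq_square)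
    also have "\<dots> \<le> 0" using c1 by simp
    finally show ?thesis by simp
  qed
  have Mle: "M t \<le> M 0" for t
    by (induction t) (use dec order_trans in blast)+
  define c where "c = 1/(2*\<gamma>) - L/2"
  have cpos: "c > 0" using gL \<gamma>_pos unfolding c_def by (simp add: field_simps)
  have low: "f (b t) + G t + c * (norm (b t - a t))\<^sup>2 \<le> M t" for t
  proof -
    have "M t = f (a t) + G t + (norm (b t - a t))\<^sup>2/(2*\<gamma>) + gradf (a t) \<bullet> (b t - a t)"
      unfolding M_def using low_id[OF F1 \<gamma>_pos, of t "b t"] by simp
    moreover have "f (b t) \<le> f (a t) + gradf (a t) \<bullet> (b t - a t) + L/2 * (norm (b t - a t))\<^sup>2" by (rule DL)
    ultimately show ?thesis unfolding c_def by (simp add: algebra_simps diff_divide_distrib)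
  qed
  define K where "K = M 0"
  have fg: "f (b t) + G t \<le> K" for t
    using low[of t] Mle[of t] cpos unfolding K_def
    by (smt (verit) mult_nonneg_nonneg zero_le_power2)
  obtain R where R: "\<forall>u. R \<le> norm u \<longrightarrow> ereal (f u) + g u > ereal K"
  proof -
    have "\<forall>\<^sub>F u in at_infinity. ereal (f u) + g u > ereal K"
      using coercive by (simp add: tendsto_PInfty)
    then show ?thesis using that unfolding eventually_at_infinity by blast
  qed
  have bR: "norm (b t) < R" for t
  proof (rule ccontr)
    assume "\<not> norm (b t) < R"
    then have "ereal (f (b t)) + g (b t) > ereal K" using R by auto
    then show False using fg[of t] unfolding gG by simp
  qed
  obtain u0 where u0: "is_minimizer (\<lambda>v. ereal \<gamma> * g v + ereal ((norm (v - 0))\<^sup>2 / 2)) u0"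
    using prox_ex by blast
  have u0fin: "g u0 \<noteq> \<infinity>"
  proof
    assume "g u0 = \<infinity>"
    then have "ereal \<gamma> * g u0 + ereal ((norm (u0 - 0))\<^sup>2 / 2) = \<infinity>" using \<gamma>_pos by simp
    moreover have "ereal \<gamma> * g u0 + ereal ((norm (u0 - 0))\<^sup>2 / 2) \<le> ereal \<gamma> * g (b 0) + ereal ((norm (b 0 - 0))\<^sup>2 / 2)"
      using u0 unfolding is_minimizer_def by blast
    ultimately have "(\<infinity>::ereal) \<le> ereal \<gamma> * g (b 0) + ereal ((norm (b 0 - 0))\<^sup>2 / 2)" by metis
    then have "(\<infinity>::ereal) \<le> ereal (\<gamma> * G 0 + (norm (b 0))\<^sup>2 / 2)" unfolding gG by simp
    then show False by simp
  qed
  define g0 where "g0 = real_of_ereal (g u0)"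
  have gu0: "g u0 = ereal g0" using u0fin ninf[of u0] unfolding g0_def by (cases "g u0") auto
  have Glow: "G t \<ge> g0 - R\<^sup>2 / (2*\<gamma>)" for t
  proof -
    have "ereal \<gamma> * g u0 + ereal ((norm (u0 - 0))\<^sup>2 / 2) \<le> ereal \<gamma> * g (b t) + ereal ((norm (b t - 0))\<^sup>2 / 2)"
      using u0 unfolding is_minimizer_def by blast
    then have "\<gamma> * g0 + (norm u0)\<^sup>2 / 2 \<le> \<gamma> * G t + (norm (b t))\<^sup>2 / 2" unfolding gG gu0 by simp
    moreover have "(norm (b t))\<^sup>2 \<le> R\<^sup>2" using bR[of t] by (intro power_mono) auto
    moreover have "0 \<le> (norm u0)\<^sup>2" by simp
    ultimately have "\<gamma> * g0 - R\<^sup>2/2 \<le> \<gamma> * G t" by linarith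
    moreover have "\<gamma> * (g0 - R\<^sup>2 / (2*\<gamma>)) = \<gamma> * g0 - R\<^sup>2/2" using \<gamma>_pos by (simp add: field_simps)
    ultimately have "\<gamma> * (g0 - R\<^sup>2 / (2*\<gamma>)) \<le> \<gamma> * G t" by simp
    then show ?thesis using \<gamma>_pos by simp
  qed
  have "continuous_on (cball 0 R) f"
    using f_grad by (meson has_derivative_continuous continuous_at_imp_continuous_on)
  then have "bounded (f ` cball 0 R)" by (simp add: compact_continuous_image compact_imp_bounded)
  then obtain B where B: "\<forall>u\<in>cball 0 R. norm (f u) \<le> B" unfolding bounded_iff by auto
  have fb: "f (b t) \<ge> -B" for t
  proof -
    have "b t \<in> cball 0 R" using bR[of t] by (simp add: dist_norm)
    then have "\<bar>f (b t)\<bar> \<le> B" using B by fastforce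
    then show ?thesis by linarith
  qed
  define C where "C = (K + B - g0 + R\<^sup>2 / (2*\<gamma>)) / c"
  have dba: "(norm (b t - a t))\<^sup>2 \<le> C" for t
  proof -
    have "c * (norm (b t - a t))\<^sup>2 \<le> K + B - g0 + R\<^sup>2 / (2*\<gamma>)"
      using low[of t] Mle[of t] fb[of t] Glow[of t] unfolding K_def by linarith
    then show ?thesis unfolding C_def using cpos by (simp add: field_simps)
  qed
  have dba': "norm (b t - a t) \<le> max 1 C" for t
  proof (cases "norm (b t - a t) \<le> 1")
    case False
    then have "norm (b t - a t) * 1 \<le> norm (b t - a t) * norm (b t - a t)"
      by (intro mult_left_mono) auto
    then have "norm (b t - a t) \<le> (norm (b t - a t))\<^sup>2" by (simp add: power2_eq_square)
    then show ?thesis using dba[of t] by simp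
  qed simp
  define Ba where "Ba = R + max 1 C"
  have aB: "norm (a t) \<le> Ba" for t
  proof -
    have "norm (a t) \<le> norm (b t) + norm (b t - a t)" by (metis norm_triangle_sub add.commute norm_minus_commute)
    then show ?thesis using bR[of t] dba'[of t] unfolding Ba_def by linarith
  qed
  have xB: "norm (x t) \<le> Ba + \<gamma> * (norm (gradf 0) + L * Ba)" for t
  proof -
    have "norm (gradf (a t)) \<le> norm (gradf 0) + norm (gradf (a t) - gradf 0)" by (metis norm_triangle_sub add.commute)
    also have "\<dots> \<le> norm (gradf 0) + L * norm (a t)" using grad_lip[rule_format, of "a t" 0] by simp
    also have "\<dots> \<le> norm (gradf 0) + L * Ba" using aB[of t] L_pos by (simp add: mult_left_mono)
    finally have "\<gamma> * norm (gradf (a t)) \<le> \<gamma> * (norm (gradf 0) + L * Ba)" using \<gamma>_pos by (simp add: mult_left_mono)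
    moreover have "norm (x t) \<le> norm (a t) + \<gamma> * norm (gradf (a t))" unfolding F1[of t]
      using norm_triangle_ineq[of "a t" "\<gamma> *\<^sub>R gradf (a t)"] \<gamma>_pos by simp
    ultimately show ?thesis using aB[of t] by linarith
  qed
  have yB: "norm (y t) \<le> max (norm (y 0)) Ba" for t
    using aB unfolding a_def by (cases t) (auto simp: le_max_iff_disj)
  have zB: "norm (z t) \<le> max (norm (z 0)) R" for t
    using bR unfolding b_def by (cases t) (auto simp: le_max_iff_disj less_imp_le)
  show ?thesis unfolding bounded_iff using xB yB zB by blast
qed
end
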